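(* Let $S\subseteq\mathbb{R}^n\times\mathbb{R}^m$ be convex, let the convex projection (CP) be self-bounded, fix $p\in[1,\infty]$ and $\epsilon>0$. If $\bar S\subseteq S$ is a finite $\epsilon$-solution of (CP) (under the $p$-norm), then $\bar S$ is a finite $(\underline{\kappa}\epsilon)$-solution of (MOCP) (under the $p$-norm), where $\underline{\kappa}=\underline{\kappa}(m,p)=m^{\frac{p-1}{p}}(m+1)^{\frac1p}$ (equal to $m$ for $p=\infty$).
   Context: $\|\cdot\|_p$ is the $p$-norm and $B_\epsilon$ the closed $\epsilon$-ball around $0$ in it. (CP): compute $Y=\{y:\exists x,(x,y)\in S\}$; recession cone $A_\infty=\{y: x+\lambda y\in A\ \forall x\in A,\lambda\ge0\}$. (CP) is self-bounded if $Y\ne\mathbb{R}^m$ and $Y\subseteq\operatorname{conv}\{y^{(1)},\dots,y^{(k)}\}+(\operatorname{cl}Y)_\infty$ for finitely many points $y^{(i)}$ (this includes the bounded case $Y\subseteq B_K$, where $(\operatorname{cl}Y)_\infty=\{0\}$). A nonempty finite $\bar S\subseteq S$ is a finite $\epsilon$-solution of (CP) if $Y\subseteq\operatorname{conv}\operatorname{proj}_y[\bar S]+(\operatorname{cl}Y)_\infty+B_\epsilon$. (MOCP): minimize $P(x,y)=(y,-\mathbf{1}^\top y)$ w.r.t. $\le_{\mathbb{R}^{m+1}_+}$ over $(x,y)\in S$, upper image $\mathcal{P}=\operatorname{cl}(P[S]+\mathbb{R}^{m+1}_+)$; $\mathbb{1}\in\mathbb{R}^{m+1}$ is the all-ones vector.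 For self-bounded (MOCP), a nonempty finite $\bar S\subseteq S$ is a finite $\epsilon$-solution of (MOCP) if $\mathcal{P}\subseteq\operatorname{conv}P[\bar S]+\mathcal{P}_\infty-\epsilon\{\|\mathbb{1}\|_p^{-1}\mathbb{1}\}$. *)

theory Defs
  imports "HOL-Analysis.Analysis" "HOL-Library.Extended_Real"
begin

definition pnorm :: "ereal \<Rightarrow> real^'k \<Rightarrow> real" where
  "pnorm p v = (if p = \<infinity> then Max (range (\<lambda>i. \<bar>v $ i\<bar>))
                else (\<Sum>i\<in>UNIV. \<bar>v $ i\<bar> powr real_of_ereal p) powr (1 / real_of_ereal p))"

definition pball :: "ereal \<Rightarrow> real \<Rightarrow> (real^'k) set" where
  "pball p e = {v. pnorm p v \<le> e}"

definition msum :: "'a::plus set \<Rightarrow> 'a set \<Rightarrow> 'a set" where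
  "msum A B = {a + b | a b. a \<in> A \<and> b \<in> B}"

definition rec_cone :: "'a::real_vector set \<Rightarrow> 'a set" where
  "rec_cone A = {y. \<forall>x\<in>A. \<forall>l::real. l \<ge> 0 \<longrightarrow> x + l *\<^sub>R y \<in> A}"

definition projY :: "((real^'n) \<times> (real^'m)) set \<Rightarrow> (real^'m) set" where
  "projY S = snd ` S"

definition CP_self_bounded :: "((real^'n) \<times> (real^'m)) set \<Rightarrow> bool" where
  "CP_self_bounded S \<longleftrightarrow> projY S \<noteq> UNIV \<and>
     (\<exists>F. finite F \<and> projY S \<subseteq> msum (convex hull F) (rec_cone (closure (projY S))))"

definition CP_finite_eps_solution ::
    "ereal \<Rightarrow> real \<Rightarrow> ((real^'n) \<times> (real^'m)) set \<Rightarrow> ((real^'n) \<times> (real^'m)) set \<Rightarrow> bool" where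
  "CP_finite_eps_solution p e S Sb \<longleftrightarrow> Sb \<noteq> {} \<and> finite Sb \<and> Sb \<subseteq> S \<and>
     projY S \<subseteq> msum (msum (convex hull (snd ` Sb)) (rec_cone (closure (projY S)))) (pball p e)"

(* objective of (MOCP): P(x,y) = (y, -1^T y) in R^(m+1), index None = last coordinate *)
definition Pobj :: "(real^'n) \<times> (real^'m) \<Rightarrow> real^('m option)" where
  "Pobj z = (\<chi> i. case i of Some j \<Rightarrow> snd z $ j | None \<Rightarrow> - (\<Sum>j\<in>UNIV. snd z $ j))"

definition nonneg_orthant :: "(real^'k) set" where
  "nonneg_orthant = {v. \<forall>i. 0 \<le> v $ i}"

definition upper_image :: "((real^'n) \<times> (real^'m)) set \<Rightarrow> (real^('m option)) set" where
  "upper_image S = closure (msum (Pobj ` S) nonneg_orthant)"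

definition ones :: "real^'k" where
  "ones = (\<chi> i. 1)"

definition MOCP_finite_eps_solution ::
    "ereal \<Rightarrow> real \<Rightarrow> ((real^'n) \<times> (real^'m)) set \<Rightarrow> ((real^'n) \<times> (real^'m)) set \<Rightarrow> bool" where
  "MOCP_finite_eps_solution p e S Sb \<longleftrightarrow> Sb \<noteq> {} \<and> finite Sb \<and> Sb \<subseteq> S \<and>
     upper_image S \<subseteq> msum (msum (convex hull (Pobj ` Sb)) (rec_cone (upper_image S)))
                          {- (e / pnorm p (ones :: real^('m option))) *\<^sub>R ones}"

definition kappa_low :: "nat \<Rightarrow> ereal \<Rightarrow> real" where
  "kappa_low m p = (if p = \<infinity> then real m
     else real m powr ((real_of_ereal p - 1) / real_of_ereal p) * real (m + 1) powr (1 / real_of_ereal p))"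

end

theory Submission
  imports Defs
begin

lemma bern:
  fixes t q :: real assumes "0 \<le> t" "1 \<le> q"
  shows "1 + q * (t - 1) \<le> t powr q"
proof (cases "t = 0")
  case True then show ?thesis using assms by simp
next
  case False
  hence tp: "t > 0" using assms by simp
  have "(q * 1 powr (q - 1)) * (t - 1) \<le> t powr q - 1 powr q"
  proof (rule f''_imp_f'[of "{0<..}" "\<lambda>x. x powr q" "\<lambda>x. q * x powr (q - 1)" "\<lambda>x. q * ((q - 1) * x powr (q - 2))"])
    show "convex {0::real<..}" by simp
    show "DERIV (\<lambda>x. x powr q) x :> q * x powr (q - 1)" if "x \<in> {0<..}" for x
      using that by (auto intro: has_real_derivative_powr)
    show "DERIV (\<lambda>x. q * x powr (q - 1)) x :> q * ((q - 1) * x powr (q - 2))" if "x \<in> {0<..}" for x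
    proof -
      have "DERIV (\<lambda>x. x powr (q - 1)) x :> (q - 1) * x powr (q - 1 - 1)"
        by (rule has_real_derivative_powr) (use that in auto)
      hence "DERIV (\<lambda>x. x powr (q - 1)) x :> (q - 1) * x powr (q - 2)" by simp
      thus ?thesis by (rule DERIV_cmult)
    qed
    show "0 \<le> q * ((q - 1) * x powr (q - 2))" if "x \<in> {0<..}" for x
      using that assms by simp
  qed (use tp in auto)
  then show ?thesis by simp
qed

lemma holder_aux:
  fixes a :: "'a \<Rightarrow> real"
  assumes "finite I" "I \<noteq> {}" "\<forall>i\<in>I. 0 \<le> a i" "1 \<le> q"
  shows "(\<Sum>i\<in>I. a i) \<le> real (card I) powr ((q-1)/q) * (\<Sum>i\<in>I. a i powr q) powr (1/q)"
proof -
  define S where "S = (\<Sum>i\<in>I. a i)"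
  define n where "n = real (card I)"
  define W where "W = (\<Sum>i\<in>I. a i powr q)"
  have n0: "n > 0" using assms by (simp add: n_def card_gt_0_iff)
  have S0: "S \<ge> 0" unfolding S_def using assms by (simp add: sum_nonneg)
  have W0: "W \<ge> 0" unfolding W_def by (simp add: sum_nonneg)
  show ?thesis
  proof (cases "S = 0")
    case True then show ?thesis using W0 by (simp add: S_def[symmetric] W_def[symmetric])
  next
    case False
    hence Sp: "S > 0" using S0 by simp
    define t where "t i = a i * n / S" for i
    have sumt: "(\<Sum>i\<in>I. t i) = n" unfolding t_def using Sp
      by (simp add: sum_divide_distrib[symmetric] sum_distrib_right[symmetric] S_def[symmetric])
    have "(\<Sum>i\<in>I. 1 + q * (t i - 1)) \<le> (\<Sum>i\<in>I. t i powr q)"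
      apply (rule sum_mono, rule bern) using assms Sp n0 by (auto simp: t_def)
    moreover have "(\<Sum>i\<in>I. 1 + q * (t i - 1)) = n"
      using sumt by (simp add: sum.distrib sum_distrib_left[symmetric] sum_subtractf n_def)
    moreover have "(\<Sum>i\<in>I. t i powr q) = (n / S) powr q * W"
      unfolding W_def sum_distrib_left t_def
    proof (rule sum.cong, simp)
      fix i assume "i \<in> I"
      hence "0 \<le> a i" using assms by auto
      have "a i * n / S = (n / S) * a i" by simp
      also have "\<dots> powr q = (n / S) powr q * a i powr q"
        using \<open>0 \<le> a i\<close> Sp n0 powr_mult[of "n / S" "a i" q] by simp
      finally show "(a i * n / S) powr q = (n / S) powr q * a i powr q" .
    qed
    ultimately have A: "n \<le> (n / S) powr q * W" by simp
    have "(n / S) powr q = n powr q / S powr q" using Sp n0 by (simp add: powr_divide)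
    with A have "n * S powr q \<le> n powr q * W" using Sp
      by (simp add: field_simps)
    hence "S powr q \<le> n powr q / n * W" using n0 by (simp add: field_simps)
    also have "n powr q / n = n powr (q - 1)" using n0 by (simp add: powr_diff)
    finally have B: "S powr q \<le> n powr (q - 1) * W" .
    have "S = (S powr q) powr (1/q)" using assms Sp by (simp add: powr_powr)
    also have "\<dots> \<le> (n powr (q - 1) * W) powr (1/q)"
      using B assms Sp by (intro powr_mono2) auto
    also have "\<dots> = n powr ((q-1)/q) * W powr (1/q)"
      using n0 W0 by (simp add: powr_mult powr_powr)
    finally show ?thesis by (simp add: S_def n_def W_def)
  qed
qed

lemma card_opt: "CARD('m::finite option) = CARD('m) + 1"
proof -
  have "(UNIV :: 'm option set) = insert None (range Some)"
    by (auto intro: option.exhaust)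
  moreover have "card (range (Some :: 'm \<Rightarrow> _)) = CARD('m)"
    by (simp add: card_image)
  ultimately show ?thesis by (simp add: card_insert_disjoint)
qed

lemma ones_nth[simp]: "(ones :: real^'k) $ i = 1"
  by (simp add: ones_def)

lemma pbound:
  fixes b :: "real^'m" and p :: ereal
  assumes "1 \<le> p" "pnorm p b \<le> e"
  shows "(\<forall>j. \<bar>b$j\<bar> \<le> kappa_low CARD('m) p * e / pnorm p (ones::real^'m option))
       \<and> (\<Sum>j\<in>UNIV. \<bar>b$j\<bar>) \<le> kappa_low CARD('m) p * e / pnorm p (ones::real^'m option)"
proof (cases "p = \<infinity>")
  case True
  have o: "pnorm p (ones::real^'m option) = 1"
    using True by (simp add: pnorm_def image_def)
  have m1: "real CARD('m) \<ge> 1" by (simp add: Suc_le_eq)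
  have bj: "\<bar>b$j\<bar> \<le> e" for j
  proof -
    have "\<bar>b$j\<bar> \<le> Max (range (\<lambda>i. \<bar>b $ i\<bar>))" by (rule Max_ge) auto
    thus ?thesis using assms True by (simp add: pnorm_def)
  qed
  hence e0: "e \<ge> 0" by (meson abs_ge_zero order_trans)
  have "e \<le> real CARD('m) * e" using m1 e0 by (simp add: mult_le_cancel_right1)
  moreover have "(\<Sum>j\<in>UNIV. \<bar>b$j\<bar>) \<le> real CARD('m) * e"
    using sum_bounded_above[of UNIV "\<lambda>j. \<bar>b$j\<bar>" e] bj by simp
  ultimately show ?thesis using True o bj kappa_low_def by (auto intro: order_trans)
next
  case False
  define q where "q = real_of_ereal p"
  have q1: "q \<ge> 1" using assms False unfolding q_def
    by (cases p) auto
  define N where "N = (\<Sum>i\<in>UNIV. \<bar>b $ i\<bar> powr q) powr (1 / q)"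
  have pN: "pnorm p b = N" using False by (simp add: pnorm_def N_def q_def)
  have po: "pnorm p (ones::real^'m option) = real (CARD('m) + 1) powr (1/q)"
    using False by (simp add: pnorm_def q_def card_opt)
  have k: "kappa_low CARD('m) p * e / pnorm p (ones::real^'m option) = real CARD('m) powr ((q-1)/q) * e"
    using False q1 by (simp add: kappa_low_def po q_def[symmetric])
  have m1: "real CARD('m) \<ge> 1" by (simp add: Suc_le_eq)
  have K1: "real CARD('m) powr ((q-1)/q) \<ge> 1" using m1 q1 by (intro ge_one_powr_ge_zero) auto
  have bj: "\<bar>b$j\<bar> \<le> N" for j
  proof -
    have "\<bar>b$j\<bar> = (\<bar>b$j\<bar> powr q) powr (1/q)" using q1 by (simp add: powr_powr)
    also have "\<dots> \<le> N" unfolding N_def using q1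
      by (intro powr_mono2) (auto intro: member_le_sum)
    finally show ?thesis .
  qed
  hence e0: "e \<ge> 0" using assms pN by (meson abs_ge_zero order_trans)
  have "e \<le> real CARD('m) powr ((q-1)/q) * e" using K1 e0 by (simp add: mult_le_cancel_right1)
  moreover have "(\<Sum>j\<in>UNIV. \<bar>b$j\<bar>) \<le> real CARD('m) powr ((q-1)/q) * N"
    using holder_aux[of "UNIV::'m set" "\<lambda>j. \<bar>b$j\<bar>" q] q1 by (simp add: N_def)
  moreover have "real CARD('m) powr ((q-1)/q) * N \<le> real CARD('m) powr ((q-1)/q) * e"
    using assms pN by (intro mult_left_mono) auto
  ultimately show ?thesis using k bj assms pN by (auto intro: order_trans)
qed

definition Lm :: "real^'m \<Rightarrow> real^('m option)" where
  "Lm y = (\<chi> i. case i of Some j \<Rightarrow> y $ j | None \<Rightarrow> - (\<Sum>j\<in>UNIV. y $ j))"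

lemma Pobj_Lm: "Pobj z = Lm (snd z)"
  by (simp add: Pobj_def Lm_def)

lemma Pobj_img: "Pobj ` A = Lm ` (snd ` A)"
  by (auto simp: Pobj_Lm image_image)

lemma linear_Lm: "linear Lm"
proof (rule linearI)
  show "Lm (x + y) = Lm x + Lm y" for x y
    by (auto simp: vec_eq_iff Lm_def sum.distrib split: option.split)
  show "Lm (c *\<^sub>R x) = c *\<^sub>R Lm x" for c x
    by (auto simp: vec_eq_iff Lm_def sum_distrib_left split: option.split)
qed

lemma cont_Lm: "continuous_on A Lm"
  using linear_Lm linear_continuous_on linear_conv_bounded_linear by blast

lemma closure_inv:
  fixes f :: "'a::topological_space \<Rightarrow> 'a"
  assumes "continuous_on UNIV f" "\<And>a. a \<in> A \<Longrightarrow> f a \<in> closure A"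
  shows "x \<in> closure A \<Longrightarrow> f x \<in> closure A"
  using image_closure_subset[of A f "closure A"] assms
  by (auto intro: continuous_on_subset)

lemma closed_rec_cone:
  fixes P :: "'a::real_normed_vector set"
  assumes "closed P" shows "closed (rec_cone P)"
proof -
  have "rec_cone P = (\<Inter>x\<in>P. \<Inter>l\<in>{0..}. (\<lambda>y. x + l *\<^sub>R y) -` P)"
    by (auto simp: rec_cone_def)
  moreover have "closed ((\<lambda>y. x + l *\<^sub>R y) -` P)" for x and l :: real
    using assms by (intro continuous_closed_vimage) (auto intro!: continuous_intros)
  ultimately show ?thesis by (simp add: closed_INT)
qed

lemma rec_cone_add: "u \<in> rec_cone P \<Longrightarrow> v \<in> rec_cone P \<Longrightarrow> u + v \<in> rec_cone P"
  unfolding rec_cone_def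
  by (simp add: scaleR_right_distrib flip: add.assoc)

theorem mainTheorem6:
  fixes S Sb :: "((real^'n) \<times> (real^'m)) set" and p :: ereal and e :: real
  assumes "convex S"
    and "CP_self_bounded S"
    and "1 \<le> p"
    and "e > 0"
    and "CP_finite_eps_solution p e S Sb"
  shows "MOCP_finite_eps_solution p (kappa_low CARD('m) p * e) S Sb"
proof -
  define Y where "Y = projY S"
  define C where "C = rec_cone (closure Y)"
  have Sb: "Sb \<noteq> {}" "finite Sb" "Sb \<subseteq> S"
    and Ysub: "Y \<subseteq> msum (msum (convex hull (snd ` Sb)) C) (pball p e)"
    using assms(5) by (auto simp: CP_finite_eps_solution_def Y_def C_def)
  define \<delta> where "\<delta> = kappa_low CARD('m) p * e / pnorm p (ones::real^'m option)"
  define A where "A = msum (Pobj ` S) (nonneg_orthant :: (real^'m option) set)"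
  define P where "P = upper_image S"
  have PA: "P = closure A" by (simp add: P_def A_def upper_image_def)
  define R where "R = rec_cone P"
  define K where "K = convex hull (Pobj ` Sb)"
  define off :: "real^'m option" where "off = - (\<delta> *\<^sub>R ones)"
  have orth: "v \<in> R" if v: "v \<in> nonneg_orthant" for v
    unfolding R_def rec_cone_def
  proof (intro CollectI ballI allI impI)
    fix x and l :: real assume x: "x \<in> P" and l: "0 \<le> l"
    show "x + l *\<^sub>R v \<in> P" unfolding PA
    proof (rule closure_inv[where f = "\<lambda>z. z + l *\<^sub>R v"])
      show "continuous_on UNIV (\<lambda>z. z + l *\<^sub>R v)" by (intro continuous_intros)
      show "x \<in> closure A" using x PA by simp
      fix a assume "a \<in> A"
      then obtain u r where u: "u \<in> Pobj ` S" "r \<in> nonneg_orthant" "a = u + r"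
        by (auto simp: A_def msum_def)
      have "r + l *\<^sub>R v \<in> nonneg_orthant" using u v l by (auto simp: nonneg_orthant_def)
      moreover have "a + l *\<^sub>R v = u + (r + l *\<^sub>R v)" using u by (simp add: add.assoc)
      ultimately have "a + l *\<^sub>R v \<in> A" using u unfolding A_def msum_def by blast
      thus "a + l *\<^sub>R v \<in> closure A" using closure_subset by blast
    qed
  qed
  have LC: "Lm d \<in> R" if d: "d \<in> C" for d
    unfolding R_def rec_cone_def
  proof (intro CollectI ballI allI impI)
    fix x and l :: real assume x: "x \<in> P" and l: "0 \<le> l"
    show "x + l *\<^sub>R Lm d \<in> P" unfolding PA
    proof (rule closure_inv[where f = "\<lambda>z. z + l *\<^sub>R Lm d"])
      show "continuous_on UNIV (\<lambda>z. z + l *\<^sub>R Lm d)" by (intro continuous_intros)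
      show "x \<in> closure A" using x PA by simp
      fix a assume "a \<in> A"
      then obtain s r where s: "s \<in> S" "r \<in> nonneg_orthant" "a = Pobj s + r"
        by (auto simp: A_def msum_def)
      have yY: "snd s \<in> Y" using s by (simp add: Y_def projY_def)
      have w: "snd s + l *\<^sub>R d \<in> closure Y"
        using d yY l closure_subset unfolding C_def rec_cone_def by blast
      have img: "(\<lambda>w. Lm w + r) ` closure Y \<subseteq> closure A"
      proof (rule image_closure_subset)
        show "continuous_on (closure Y) (\<lambda>w. Lm w + r)"
          by (intro continuous_intros cont_Lm)
        show "closed (closure A)" by simp
        show "(\<lambda>w. Lm w + r) ` Y \<subseteq> closure A"
        proof
          fix z assume "z \<in> (\<lambda>w. Lm w + r) ` Y"
          then obtain w where "w \<in> Y" "z = Lm w + r" by auto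
          then obtain s' where "s' \<in> S" "w = snd s'" by (auto simp: Y_def projY_def)
          hence "z \<in> A" using \<open>z = Lm w + r\<close> s(2) unfolding A_def msum_def
            by (auto simp: Pobj_Lm)
          thus "z \<in> closure A" using closure_subset by blast
        qed
      qed
      have "a + l *\<^sub>R Lm d = Lm (snd s + l *\<^sub>R d) + r"
        using s(3) by (simp add: linear_add[OF linear_Lm] linear_scale[OF linear_Lm] Pobj_Lm algebra_simps)
      thus "a + l *\<^sub>R Lm d \<in> closure A" using img w by auto
    qed
  qed
  have closedR: "closed R" unfolding R_def PA by (intro closed_rec_cone) simp
  have compK: "compact K" unfolding K_def using Sb
    by (intro finite_imp_compact_convex_hull) auto
  have closedT: "closed (msum (msum K R) {off})"
  proof -
    have e1: "msum K R = (\<Union>x\<in>R. \<Union>y\<in>K. {x + y})"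
      unfolding msum_def by (auto simp: add.commute) (metis add.commute)
    have "closed (msum K R)" unfolding e1 using closedR compK by (rule closed_compact_sums)
    moreover have "msum (msum K R) {off} = (+) off ` msum K R"
      by (auto simp: msum_def add.commute)
    ultimately show ?thesis by (simp add: closed_translation)
  qed
  have sub: "A \<subseteq> msum (msum K R) {off}"
  proof
    fix z assume "z \<in> A"
    then obtain s r where s: "s \<in> S" "r \<in> nonneg_orthant" "z = Pobj s + r"
      by (auto simp: A_def msum_def)
    have "snd s \<in> Y" using s by (simp add: Y_def projY_def)
    then obtain c d b where cdb: "c \<in> convex hull (snd ` Sb)" "d \<in> C" "b \<in> pball p e"
      "snd s = c + d + b"
      using Ysub unfolding msum_def by blast
    have "Lm c \<in> K" unfolding K_def Pobj_img
      using cdb(1) convex_hull_linear_image[OF linear_Lm, of "snd ` Sb"] by blast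
    have pb: "pnorm p b \<le> e" using cdb(3) by (simp add: pball_def)
    note bd = pbound[OF assms(3) pb, folded \<delta>_def]
    have sb: "(\<Sum>j\<in>UNIV. b $ j) \<le> \<delta>"
      using bd sum_mono[of UNIV "\<lambda>j. b $ j" "\<lambda>j. \<bar>b $ j\<bar>"] by fastforce
    have wo: "Lm b + \<delta> *\<^sub>R ones \<in> nonneg_orthant"
      unfolding nonneg_orthant_def
    proof (intro CollectI allI)
      fix i :: "'m option"
      show "0 \<le> (Lm b + \<delta> *\<^sub>R ones) $ i"
      proof (cases i)
        case None then show ?thesis using sb by (simp add: Lm_def)
      next
        case (Some j) then show ?thesis using bd by (simp add: Lm_def) (smt (verit) abs_ge_minus_self)
      qed
    qed
    define q where "q = Lm d + (Lm b + \<delta> *\<^sub>R ones) + r"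
    have "q \<in> R" unfolding q_def
      by (intro rec_cone_add[of _ P, folded R_def] LC orth cdb(2) wo s(2))
    have "z = Lm c + q + off"
      using s(3) cdb(4)
      by (simp add: q_def off_def Pobj_Lm linear_add[OF linear_Lm] algebra_simps)
    thus "z \<in> msum (msum K R) {off}"
      unfolding msum_def using \<open>Lm c \<in> K\<close> \<open>q \<in> R\<close> by blast
  qed
  have "P \<subseteq> msum (msum K R) {off}"
    unfolding PA using sub closedT by (rule closure_minimal)
  moreover have "- (kappa_low CARD('m) p * e / pnorm p (ones::real^'m option)) *\<^sub>R ones = off"
    by (simp add: off_def \<delta>_def)
  ultimately show ?thesis
    using Sb by (simp add: MOCP_finite_eps_solution_def P_def R_def K_def)
qed

end
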